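(* Fix $p\in[0,1]$, and let $C=\{(i,j)\in\mathcal{L}:i\in\{0,1\},\ j<0\}$. Let $A\supset B$ be infinite subsets of $C$. Then for every $n\ge0$, $$\mathbb{E}_p\big[u^n_{B\cup\{o\}}-u^n_B\big]\ge\mathbb{E}_p\big[u^n_{A\cup\{o\}}-u^n_A\big]\ge 2p.$$
   Context: Let $\mathcal{L}=\{(n,m)\in\mathbb{Z}^2:n\ge0,\ n+m\text{ even}\}$. Under $\mathbb{P}_p$, each site of $\mathcal{L}$ is independently open with probability $p$ and closed otherwise. For $z,z'\in\mathcal{L}$ write $z\to z'$ if there exist $k\ge0$ and sites $z=z_0,\dots,z_k=z'$ of $\mathcal{L}$ such that $z_0,\dots,z_{k-1}$ are open and $z_{i+1}-z_i\in\{(1,1),(2,0),(1,-1)\}$ for every $i$. Let $o=(0,0)$. For a set $A\subset\mathcal{L}$, let $\xi^n_A=\{x:z\to(n,x)\text{ for some }z\in A\}$ and $u^n_A=\sup\xi^n_A$, with $\sup\emptyset=-\infty$. *)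

theory Defs
  imports "HOL-Probability.Probability"
begin

definition Lat :: "(int \<times> int) set" where
  "Lat = {(n, m). n \<ge> 0 \<and> even (n + m)}"

definition step_ok :: "int \<times> int \<Rightarrow> int \<times> int \<Rightarrow> bool" where
  "step_ok z w \<longleftrightarrow> (fst w - fst z, snd w - snd z) \<in> {(1, 1), (2, 0), (1, -1)}"

definition reach :: "(int \<times> int \<Rightarrow> bool) \<Rightarrow> int \<times> int \<Rightarrow> int \<times> int \<Rightarrow> bool" where
  "reach \<omega> z z' \<longleftrightarrow> (\<exists>zs. zs \<noteq> [] \<and> hd zs = z \<and> last zs = z' \<and> set zs \<subseteq> Lat \<and>
      (\<forall>i. i + 1 < length zs \<longrightarrow> \<omega> (zs ! i) \<and> step_ok (zs ! i) (zs ! (i + 1))))"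

definition xi :: "(int \<times> int \<Rightarrow> bool) \<Rightarrow> (int \<times> int) set \<Rightarrow> nat \<Rightarrow> int set" where
  "xi \<omega> A n = {x. \<exists>z\<in>A. reach \<omega> z (int n, x)}"

text \<open>u^n_A = sup xi^n_A, with sup of the empty set = -\<infinity> (Sup in ereal).\<close>
definition u :: "(int \<times> int \<Rightarrow> bool) \<Rightarrow> (int \<times> int) set \<Rightarrow> nat \<Rightarrow> ereal" where
  "u \<omega> A n = Sup ((\<lambda>x. ereal (real_of_int x)) ` xi \<omega> A n)"

text \<open>The nonnegative increment u^n_{A \<union> {o}} - u^n_A, with the conventions
  (-\<infinity>) - (-\<infinity>) = 0 and a - (-\<infinity>) = \<infinity> for a > -\<infinity>.\<close>
definition incr :: "(int \<times> int \<Rightarrow> bool) \<Rightarrow> (int \<times> int) set \<Rightarrow> nat \<Rightarrow> ennreal" where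
  "incr \<omega> A n =
     (if u \<omega> A n = -\<infinity> then (if u \<omega> (A \<union> {(0, 0)}) n = -\<infinity> then 0 else \<infinity>)
      else e2ennreal (u \<omega> (A \<union> {(0, 0)}) n - u \<omega> A n))"

definition perc :: "real \<Rightarrow> (int \<times> int \<Rightarrow> bool) measure" where
  "perc p = PiM Lat (\<lambda>_. measure_pmf (bernoulli_pmf p))"

definition Cset :: "(int \<times> int) set" where
  "Cset = {(i, j) \<in> Lat. i \<in> {0, 1} \<and> j < 0}"

end

theory Submission
  imports Defs
begin


inductive R :: "(int \<times> int \<Rightarrow> bool) \<Rightarrow> int \<times> int \<Rightarrow> int \<times> int \<Rightarrow> bool" for \<omega> where
  R0: "z \<in> Lat \<Longrightarrow> R \<omega> z z"
| RS: "z \<in> Lat \<Longrightarrow> \<omega> z \<Longrightarrow> step_ok z z' \<Longrightarrow> R \<omega> z' w \<Longrightarrow> R \<omega> z w"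

lemma reach_imp_R:
  assumes "zs \<noteq> []" "hd zs = z" "last zs = w" "set zs \<subseteq> Lat"
    "\<forall>i. i + 1 < length zs \<longrightarrow> \<omega> (zs ! i) \<and> step_ok (zs ! i) (zs ! (i + 1))"
  shows "R \<omega> z w"
  using assms
proof (induction zs arbitrary: z)
  case Nil then show ?case by simp
next
  case (Cons a zs)
  show ?case
  proof (cases "zs = []")
    case True
    then show ?thesis using Cons.prems by (auto intro: R0)
  next
    case False
    have h0: "\<omega> a" "step_ok a (hd zs)"
      using Cons.prems(5)[rule_format, of 0] False by (auto simp: hd_conv_nth)
    have "R \<omega> (hd zs) w"
    proof (rule Cons.IH[OF False refl])
      show "last zs = w" using Cons.prems False by simp
      show "set zs \<subseteq> Lat" using Cons.prems by simp
      show "\<forall>i. i + 1 < length zs \<longrightarrow> \<omega> (zs ! i) \<and> step_ok (zs ! i) (zs ! (i + 1))"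
        using Cons.prems(5) by (metis Suc_eq_plus1 length_Cons not_less_eq nth_Cons_Suc)
    qed
    then show ?thesis using Cons.prems h0 by (auto intro: RS)
  qed
qed

lemma R_imp_reach:
  assumes "R \<omega> z w"
  shows "\<exists>zs. zs \<noteq> [] \<and> hd zs = z \<and> last zs = w \<and> set zs \<subseteq> Lat \<and>
      (\<forall>i. i + 1 < length zs \<longrightarrow> \<omega> (zs ! i) \<and> step_ok (zs ! i) (zs ! (i + 1)))"
  using assms
proof (induction rule: R.induct)
  case (R0 z)
  then show ?case by (intro exI[of _ "[z]"]) auto
next
  case (RS z z' w)
  then obtain zs where zs: "zs \<noteq> []" "hd zs = z'" "last zs = w" "set zs \<subseteq> Lat"
      "\<forall>i. i + 1 < length zs \<longrightarrow> \<omega> (zs ! i) \<and> step_ok (zs ! i) (zs ! (i + 1))" by blast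
  have "z # zs \<noteq> [] \<and> hd (z # zs) = z \<and> last (z # zs) = w \<and> set (z # zs) \<subseteq> Lat"
    using RS zs by auto
  moreover have "\<forall>i. i + 1 < length (z # zs) \<longrightarrow> \<omega> ((z # zs) ! i) \<and> step_ok ((z # zs) ! i) ((z # zs) ! (i + 1))"
  proof (intro allI impI)
    fix i assume i: "i + 1 < length (z # zs)"
    show "\<omega> ((z # zs) ! i) \<and> step_ok ((z # zs) ! i) ((z # zs) ! (i + 1))"
    proof (cases i)
      case 0 then show ?thesis using RS zs by (simp add: hd_conv_nth)
    next
      case (Suc j) then show ?thesis using zs(5)[rule_format, of j] i by simp
    qed
  qed
  ultimately show ?case by blast
qed

lemma reach_R: "reach \<omega> z w \<longleftrightarrow> R \<omega> z w"
  unfolding reach_def using reach_imp_R R_imp_reach by metis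

lemma step_ok_iff: "step_ok z z' \<longleftrightarrow> z' = (fst z + 1, snd z + 1) \<or> z' = (fst z + 2, snd z) \<or> z' = (fst z + 1, snd z - 1)"
  unfolding step_ok_def by (cases z; cases z') auto

lemma R_fst:
  assumes "R \<omega> z w"
  shows "fst z \<le> fst w \<and> snd w - snd z \<le> fst w - fst z \<and> (fst w = fst z \<longrightarrow> w = z)"
  using assms by induction (auto simp: step_ok_iff)

lemma R_mono:
  assumes "R \<omega> z w" "\<And>s. \<omega> s \<Longrightarrow> \<omega>' s"
  shows "R \<omega>' z w"
  using assms(1) by induction (auto intro: R.intros assms(2))

lemma R_agree:
  assumes "R \<omega> z w" "z \<noteq> (0,0)" "fst z \<ge> 0" "\<And>s. s \<noteq> (0,0) \<Longrightarrow> \<omega>' s = \<omega> s"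
  shows "R \<omega>' z w"
  using assms(1-3)
proof induction
  case (R0 z) then show ?case by (auto intro: R.R0)
next
  case (RS z z' w)
  have "z' \<noteq> (0,0)" "fst z' \<ge> 0" using RS.hyps(3) RS.prems by (auto simp: step_ok_iff)
  have "\<omega>' z" using RS.hyps(2) assms(4)[OF RS.prems(1)] by simp
  then show ?case using RS \<open>z' \<noteq> (0,0)\<close> \<open>fst z' \<ge> 0\<close> by (intro R.RS[of z \<omega>' z']) auto
qed

lemma Lat_shift: "(a, b + 2) \<in> Lat \<longleftrightarrow> (a, b) \<in> Lat"
  unfolding Lat_def by auto

definition sh :: "(int \<times> int \<Rightarrow> bool) \<Rightarrow> (int \<times> int \<Rightarrow> bool)" where
  "sh \<omega> = (\<lambda>s\<in>Lat. \<omega> (fst s, snd s + 2))"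

lemma R_sh1:
  assumes "R \<omega> z w"
  shows "R (sh \<omega>) (fst z, snd z - 2) (fst w, snd w - 2)"
  using assms
proof induction
  case (R0 z) then show ?case using Lat_shift[of "fst z" "snd z - 2"] by (auto intro: R.R0)
next
  case (RS z z' w)
  have L: "(fst z, snd z - 2) \<in> Lat" using RS.hyps(1) Lat_shift[of "fst z" "snd z - 2"] by simp
  then show ?case using RS by (intro R.RS[OF L _ _ RS.IH]) (auto simp: sh_def step_ok_iff)
qed

lemma R_sh2:
  assumes "R (sh \<omega>) z w"
  shows "R \<omega> (fst z, snd z + 2) (fst w, snd w + 2)"
  using assms
proof induction
  case (R0 z) then show ?case using Lat_shift[of "fst z" "snd z"] by (auto intro: R.R0)
next
  case (RS z z' w)
  have L: "(fst z, snd z + 2) \<in> Lat" using RS.hyps(1) Lat_shift[of "fst z" "snd z"] by simp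
  then show ?case using RS by (intro R.RS[OF L _ _ RS.IH]) (auto simp: sh_def step_ok_iff)
qed



definition G :: "ereal \<Rightarrow> ereal \<Rightarrow> ennreal" where
  "G a b = (if a = -\<infinity> then (if b = -\<infinity> then 0 else \<infinity>) else e2ennreal (b - a))"

lemma incr_G: "incr \<omega> A n = G (u \<omega> A n) (u \<omega> (A \<union> {(0,0)}) n)"
  unfolding incr_def G_def by simp

lemma G_anti:
  assumes "a \<le> a'" "a' < \<infinity>" "c < \<infinity>"
  shows "G a' (max a' c) \<le> G a (max a c)"
proof (cases "a = -\<infinity>")
  case True
  show ?thesis
  proof (cases "a' = -\<infinity>")
    case True
    then show ?thesis using \<open>a = -\<infinity>\<close> by simp
  next
    case False
    show ?thesis
    proof (cases "c = -\<infinity>")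
      case True
      have "G a' (max a' c) = 0" using True False assms(2) unfolding G_def by (cases a') auto
      then show ?thesis by simp
    next
      case False
      then show ?thesis using \<open>a = -\<infinity>\<close> unfolding G_def by simp
    qed
  qed
next
  case False
  then obtain x where x: "a = ereal x" using assms by (cases a) auto
  moreover obtain x' where x': "a' = ereal x'" using assms x by (cases a') auto
  ultimately have xx: "x \<le> x'" using assms by simp
  show ?thesis
  proof (cases c)
    case (real r)
    have "e2ennreal (ereal (max x' r - x')) \<le> e2ennreal (ereal (max x r - x))"
      by (rule e2ennreal_mono) (use xx in auto)
    moreover have "max (ereal x') (ereal r) - ereal x' = ereal (max x' r - x')" "max (ereal x) (ereal r) - ereal x = ereal (max x r - x)"
      by (auto simp: max_def)
    ultimately show ?thesis using x x' real unfolding G_def by (simp del: e2ennreal_ereal)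
  next
    case PInf then show ?thesis using assms by simp
  next
    case MInf then show ?thesis using x x' unfolding G_def by simp
  qed
qed

lemma G_mono_right:
  assumes "a \<le> b'" "b' \<le> b" "b < \<infinity>"
  shows "G a b' \<le> G a b"
proof (cases "a = -\<infinity>")
  case True
  then show ?thesis using assms unfolding G_def by auto
next
  case False
  then have "b' \<noteq> -\<infinity>" "b \<noteq> -\<infinity>" using assms by auto
  moreover have "b' - a \<le> b - a" using assms False by (simp add: ereal_minus_mono)
  ultimately show ?thesis using False unfolding G_def by (simp add: e2ennreal_mono)
qed

lemma G_refl: "a < \<infinity> \<Longrightarrow> G a a = 0"
  unfolding G_def by (cases a) auto

lemma G_ge2:
  assumes "a \<le> -2" "0 \<le> b"
  shows "2 \<le> G a b"
proof (cases "a = -\<infinity>")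
  case True
  then show ?thesis using assms unfolding G_def by auto
next
  case False
  then obtain x where x: "a = ereal x" using assms by (cases a) auto
  show ?thesis
  proof (cases b)
    case (real r)
    have "ennreal 2 \<le> ennreal (r - x)" using assms x real by (intro ennreal_leI) auto
    then show ?thesis using x real unfolding G_def by simp
  qed (use assms x in \<open>auto simp: G_def\<close>)
qed

lemma xi_R: "xi \<omega> A n = {x. \<exists>z\<in>A. R \<omega> z (int n, x)}"
  unfolding xi_def reach_R ..

lemma u_Un: "u \<omega> (A \<union> B) n = max (u \<omega> A n) (u \<omega> B n)"
  unfolding u_def xi_def by (simp add: Collect_disj_eq bex_Un image_Un Sup_union_distrib sup_max)

lemma u_mono: "A \<subseteq> B \<Longrightarrow> u \<omega> A n \<le> u \<omega> B n"
  unfolding u_def xi_def by (rule Sup_subset_mono) auto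

lemma u_ge: "z \<in> A \<Longrightarrow> R \<omega> z (int n, x) \<Longrightarrow> ereal (real_of_int x) \<le> u \<omega> A n"
  unfolding u_def xi_R by (rule Sup_upper) auto

lemma u_le:
  assumes "\<And>z. z \<in> A \<Longrightarrow> 0 \<le> fst z \<and> snd z \<le> c"
  shows "u \<omega> A n \<le> ereal (real_of_int (c + int n))"
  unfolding u_def xi_R
proof (rule Sup_least, clarsimp)
  fix x a b assume "(a,b) \<in> A" "R \<omega> (a, b) (int n, x)"
  then have "0 \<le> a" "b \<le> c" "x - b \<le> int n - a" using assms[of "(a,b)"] R_fst[of \<omega> "(a,b)"] by auto
  then show "real_of_int x \<le> real_of_int c + real n" by linarith
qed

lemma u_fin:
  assumes "\<And>z. z \<in> A \<Longrightarrow> 0 \<le> fst z \<and> snd z \<le> c"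
  shows "u \<omega> A n < \<infinity>"
proof -
  have "u \<omega> A n \<le> ereal (real_of_int (c + int n))" using assms by (rule u_le)
  moreover have "ereal (real_of_int (c + int n)) < \<infinity>" by simp
  ultimately show ?thesis by (rule le_less_trans)
qed



lemma Cset_iff: "(a, b) \<in> Cset \<longleftrightarrow> (a = 0 \<or> a = 1) \<and> b < 0 \<and> even (a + b)"
  unfolding Cset_def Lat_def by auto

lemma Cset_Lat: "Cset \<subseteq> Lat"
  unfolding Cset_def by auto

lemma o_Lat: "(0,0) \<in> Lat"
  unfolding Lat_def by auto

lemma Cset_bound: "z \<in> Cset \<Longrightarrow> 0 \<le> fst z \<and> snd z \<le> 0"
  by (cases z) (auto simp: Cset_iff)

definition H2 :: "(int \<times> int) set" where
  "H2 = (\<lambda>(a,b). (a, b + 2)) ` Cset"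

definition H3 :: "(int \<times> int) set" where
  "H3 = Cset \<union> {(1,1),(2,0)}"

lemma H2_eq: "H2 = insert (0,0) (insert (1,1) Cset)"
proof (intro set_eqI iffI)
  fix z assume "z \<in> H2"
  then obtain a b where "z = (a, b + 2)" "(a,b) \<in> Cset" unfolding H2_def by auto
  moreover have "(a = 0 \<and> b + 2 = 0) \<or> (a = 1 \<and> b + 2 = 1) \<or> ((a = 0 \<or> a = 1) \<and> b + 2 < 0 \<and> even (a + (b + 2)))"
    using \<open>(a,b) \<in> Cset\<close> unfolding Cset_iff by presburger
  ultimately show "z \<in> insert (0,0) (insert (1,1) Cset)" by (auto simp: Cset_iff)
next
  fix z assume z: "z \<in> insert (0,0) (insert (1,1) Cset)"
  obtain a b where zab: "z = (a,b)" by (cases z)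
  have "(a = 0 \<and> b = 0) \<or> (a = 1 \<and> b = 1) \<or> ((a = 0 \<or> a = 1) \<and> b < 0 \<and> even (a + b))"
    using z unfolding zab by (auto simp: Cset_iff)
  then have "(a = 0 \<or> a = 1) \<and> b - 2 < 0 \<and> even (a + (b - 2))" by presburger
  then have "(a, b - 2) \<in> Cset" unfolding Cset_iff by simp
  moreover have "z = (\<lambda>(a,b). (a, b + 2)) (a, b - 2)" using zab by simp
  ultimately show "z \<in> H2" unfolding H2_def by blast
qed

lemma H2_bound: "z \<in> H2 \<Longrightarrow> 0 \<le> fst z \<and> snd z \<le> 2"
  unfolding H2_eq using Cset_bound[of z] by auto

lemma H3_bound: "z \<in> H3 \<Longrightarrow> 0 \<le> fst z \<and> snd z \<le> 2"
  unfolding H3_def using Cset_bound[of z] by auto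

lemma R_from_o:
  assumes "R \<omega> (0,0) (int n, x)" "n \<ge> 1"
  shows "\<omega> (0,0) \<and> (R \<omega> (1,1) (int n, x) \<or> R \<omega> (2,0) (int n, x) \<or> R \<omega> (1,-1) (int n, x))"
  using assms
  by (cases rule: R.cases) (auto simp: step_ok_iff)

lemma m1_Cset: "(1,-1) \<in> Cset"
  by (simp add: Cset_iff)

lemma xi_o_open:
  assumes "\<omega> (0,0)" "n \<ge> 1"
  shows "xi \<omega> (insert (0,0) Cset) n = xi \<omega> H3 n"
proof (intro set_eqI iffI)
  fix x assume "x \<in> xi \<omega> (insert (0,0) Cset) n"
  then obtain z where z: "z \<in> insert (0,0) Cset" "R \<omega> z (int n, x)" unfolding xi_R by auto
  show "x \<in> xi \<omega> H3 n"
  proof (cases "z = (0,0)")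
    case True
    have "R \<omega> (0,0) (int n, x)" using z True by simp
    then have "R \<omega> (1,1) (int n, x) \<or> R \<omega> (2,0) (int n, x) \<or> R \<omega> (1,-1) (int n, x)"
      using R_from_o assms by blast
    moreover have "(1,1) \<in> H3" "(2,0) \<in> H3" "(1,-1) \<in> H3" using m1_Cset by (auto simp: H3_def)
    ultimately show ?thesis unfolding xi_R by blast
  next
    case False
    then have "z \<in> H3" using z unfolding H3_def by blast
    then show ?thesis using z unfolding xi_R by blast
  qed
next
  fix x assume "x \<in> xi \<omega> H3 n"
  then obtain z where z: "z \<in> H3" "R \<omega> z (int n, x)" unfolding xi_R by auto
  show "x \<in> xi \<omega> (insert (0,0) Cset) n"
  proof (cases "z \<in> Cset")
    case True
    then show ?thesis using z unfolding xi_R by blast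
  next
    case False
    then have "z = (1,1) \<or> z = (2,0)" using z unfolding H3_def by blast
    then have "step_ok (0,0) z" by (auto simp: step_ok_def)
    from R.RS[OF o_Lat assms(1) this z(2)] have "R \<omega> (0,0) (int n, x)" .
    then show ?thesis unfolding xi_R by blast
  qed
qed

lemma xi_o_closed:
  assumes "\<not> \<omega> (0,0)" "n \<ge> 1"
  shows "xi \<omega> (insert (0,0) Cset) n = xi \<omega> Cset n"
proof -
  have "\<not> R \<omega> (0,0) (int n, x)" for x using R_from_o[of \<omega> n x] assms by blast
  then show ?thesis unfolding xi_R by blast
qed

lemma xi_H2_H3:
  assumes "n \<ge> 1"
  shows "xi \<omega> H2 n \<subseteq> xi \<omega> H3 n"
proof
  fix x assume "x \<in> xi \<omega> H2 n"
  then obtain z where z: "z \<in> H2" "R \<omega> z (int n, x)" unfolding xi_R by auto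
  show "x \<in> xi \<omega> H3 n"
  proof (cases "z = (0,0)")
    case True
    have "R \<omega> (0,0) (int n, x)" using z True by simp
    then have "R \<omega> (1,1) (int n, x) \<or> R \<omega> (2,0) (int n, x) \<or> R \<omega> (1,-1) (int n, x)"
      using R_from_o assms by blast
    moreover have "(1,1) \<in> H3" "(2,0) \<in> H3" "(1,-1) \<in> H3" using m1_Cset by (auto simp: H3_def)
    ultimately show ?thesis unfolding xi_R by blast
  next
    case False
    then have "z \<in> H3" using z unfolding H3_def H2_eq by blast
    then show ?thesis using z unfolding xi_R by blast
  qed
qed

lemma xi_upd:
  assumes "(0,0) \<notin> A" "\<And>z. z \<in> A \<Longrightarrow> 0 \<le> fst z"
  shows "xi (fun_upd \<omega> (0,0) b) A n = xi \<omega> A n"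
proof -
  have "R (fun_upd \<omega> (0,0) b) z w \<longleftrightarrow> R \<omega> z w" if "z \<in> A" for z w
  proof
    assume h: "R (fun_upd \<omega> (0,0) b) z w"
    show "R \<omega> z w" by (rule R_agree[OF h]) (use that assms in auto)
  next
    assume h: "R \<omega> z w"
    show "R (fun_upd \<omega> (0,0) b) z w" by (rule R_agree[OF h]) (use that assms in auto)
  qed
  then show ?thesis unfolding xi_R by auto
qed

lemma u_upd:
  assumes "(0,0) \<notin> A" "\<And>z. z \<in> A \<Longrightarrow> 0 \<le> fst z"
  shows "u (fun_upd \<omega> (0,0) b) A n = u \<omega> A n"
  using xi_upd[OF assms] by (simp add: u_def)

lemma xi_H2_sh: "xi \<omega> H2 n = (\<lambda>x. x + 2) ` xi (sh \<omega>) Cset n"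
proof (intro set_eqI iffI)
  fix x assume "x \<in> xi \<omega> H2 n"
  then obtain a b where ab: "(a,b) \<in> Cset" "R \<omega> (a, b + 2) (int n, x)" unfolding xi_R H2_def by auto
  from R_sh1[OF ab(2)] have "R (sh \<omega>) (a, b) (int n, x - 2)" by simp
  then have "x - 2 \<in> xi (sh \<omega>) Cset n" using ab unfolding xi_R by auto
  then show "x \<in> (\<lambda>x. x + 2) ` xi (sh \<omega>) Cset n" by force
next
  fix x assume "x \<in> (\<lambda>x. x + 2) ` xi (sh \<omega>) Cset n"
  then obtain y z where yz: "x = y + 2" "z \<in> Cset" "R (sh \<omega>) z (int n, y)" unfolding xi_R by auto
  from R_sh2[OF yz(3)] have "R \<omega> (fst z, snd z + 2) (int n, x)" using yz by simp
  moreover have "(fst z, snd z + 2) \<in> H2" using yz unfolding H2_def by (cases z) force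
  ultimately show "x \<in> xi \<omega> H2 n" unfolding xi_R by auto
qed

lemma u_H2_sh: "u \<omega> H2 n = u (sh \<omega>) Cset n + 2"
proof -
  let ?S = "xi (sh \<omega>) Cset n"
  have "u \<omega> H2 n = (SUP x\<in>?S. ereal (real_of_int x) + 2)"
    unfolding u_def xi_H2_sh image_image by (simp add: add.commute)
  also have "\<dots> = u (sh \<omega>) Cset n + 2"
  proof (cases "?S = {}")
    case True then show ?thesis unfolding u_def by (simp add: bot_ereal_def)
  next
    case False then show ?thesis unfolding u_def by (rule SUP_ereal_add_left) simp
  qed
  finally show ?thesis .
qed

lemma straight_path:
  assumes "even j" "\<And>i. 0 \<le> i \<Longrightarrow> i < int n \<Longrightarrow> \<omega> (i, j + i)"
  shows "R \<omega> (0, j) (int n, j + int n)"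
proof -
  have "m \<le> n \<Longrightarrow> R \<omega> (int n - int m, j + int n - int m) (int n, j + int n)" for m
  proof (induction m)
    case 0
    have "(int n, j + int n) \<in> Lat" using assms(1) unfolding Lat_def by auto
    then show ?case by (simp add: R.R0)
  next
    case (Suc m)
    have L: "(int n - int (Suc m), j + int n - int (Suc m)) \<in> Lat"
      using Suc.prems assms(1) unfolding Lat_def by auto
    have O: "\<omega> (int n - int (Suc m), j + int n - int (Suc m))"
      using assms(2)[of "int n - int (Suc m)"] Suc.prems by (simp add: algebra_simps)
    have S: "step_ok (int n - int (Suc m), j + int n - int (Suc m)) (int n - int m, j + int n - int m)"
      unfolding step_ok_def by simp
    show ?case using R.RS[OF L O S Suc.IH] Suc.prems by simp
  qed
  from this[of n] show ?thesis by simp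
qed



lemma pred_open: "s \<in> Lat \<Longrightarrow> Measurable.pred (perc p) (\<lambda>\<omega>. \<omega> s)"
proof -
  assume s: "s \<in> Lat"
  have m: "(\<lambda>\<omega>. \<omega> s) \<in> measurable (perc p) (measure_pmf (bernoulli_pmf p))"
    unfolding perc_def using s by (rule measurable_component_singleton)
  have "(\<lambda>\<omega>. \<omega> s) -` {True} \<inter> space (perc p) \<in> sets (perc p)"
    by (rule measurable_sets[OF m]) simp
  moreover have "(\<lambda>\<omega>. \<omega> s) -` {True} \<inter> space (perc p) = {\<omega> \<in> space (perc p). \<omega> s}" by auto
  ultimately show ?thesis unfolding Measurable.pred_def by simp
qed

definition Pth :: "int \<times> int \<Rightarrow> int \<times> int \<Rightarrow> (int \<times> int) list set" where
  "Pth z w = {zs. zs \<noteq> [] \<and> hd zs = z \<and> last zs = w \<and> set zs \<subseteq> Lat \<and>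
      (\<forall>i. i + 1 < length zs \<longrightarrow> step_ok (zs ! i) (zs ! (i + 1)))}"

lemma R_Pth: "R \<omega> z w \<longleftrightarrow> (\<exists>zs. zs \<in> Pth z w \<and> (\<forall>i\<in>{..<length zs - 1}. \<omega> (zs ! i)))"
  unfolding reach_R[symmetric] reach_def Pth_def by auto

lemma pred_conj_const: "(c \<Longrightarrow> Measurable.pred M Q) \<Longrightarrow> Measurable.pred M (\<lambda>x. c \<and> Q x)"
  by (cases c) auto

lemma pred_R: "Measurable.pred (perc p) (\<lambda>\<omega>. R \<omega> z w)"
  unfolding R_Pth
proof (intro pred_intros_countable pred_conj_const pred_intros_finite)
  fix zs i assume "zs \<in> Pth z w" "i \<in> {..<length zs - 1}"
  then have "zs ! i \<in> Lat" unfolding Pth_def by (auto dest!: nth_mem[of i zs])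
  then show "Measurable.pred (perc p) (\<lambda>\<omega>. \<omega> (zs ! i))" by (rule pred_open)
qed simp

lemma Sup_as_SUP: "Sup ((\<lambda>x. ereal (real_of_int x)) ` S) = (SUP x\<in>(UNIV::int set). if x \<in> S then ereal (real_of_int x) else -\<infinity>)"
proof (rule antisym)
  show "Sup ((\<lambda>x. ereal (real_of_int x)) ` S) \<le> (SUP x\<in>(UNIV::int set). if x \<in> S then ereal (real_of_int x) else -\<infinity>)"
  proof (rule Sup_least, clarify)
    fix x assume "x \<in> S"
    then show "ereal (real_of_int x) \<le> (SUP x\<in>(UNIV::int set). if x \<in> S then ereal (real_of_int x) else -\<infinity>)"
      by (intro SUP_upper2[of x]) auto
  qed
  show "(SUP x\<in>(UNIV::int set). if x \<in> S then ereal (real_of_int x) else -\<infinity>) \<le> Sup ((\<lambda>x. ereal (real_of_int x)) ` S)"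
    by (rule SUP_least) (auto intro: Sup_upper)
qed

lemma u_measurable[measurable]: "(\<lambda>\<omega>. u \<omega> A n) \<in> borel_measurable (perc p)"
proof -
  have eq: "(\<lambda>\<omega>. u \<omega> A n) = (\<lambda>\<omega>. SUP x\<in>(UNIV::int set). if (\<exists>z\<in>A. R \<omega> z (int n, x)) then ereal (real_of_int x) else -\<infinity>)"
    unfolding u_def xi_R Sup_as_SUP by simp
  have P: "Measurable.pred (perc p) (\<lambda>\<omega>. \<exists>z\<in>A. R \<omega> z (int n, x))" for x
    by (intro pred_intros_countable_bounded pred_R)
  show ?thesis unfolding eq
    by (intro borel_measurable_SUP measurable_If) (use P in \<open>auto simp: Measurable.pred_def\<close>)
qed

lemma G_measurable[measurable]:
  assumes f: "f \<in> borel_measurable M" and g: "g \<in> borel_measurable M"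
  shows "(\<lambda>x. G (f x) (g x)) \<in> borel_measurable M"
proof -
  have c: "(\<lambda>x. -\<infinity>::ereal) \<in> borel_measurable M" by simp
  have s1: "{x\<in>space M. f x = -\<infinity>} \<in> sets M" by (rule borel_measurable_eq[OF f c])
  have s2: "{x\<in>space M. g x = -\<infinity>} \<in> sets M" by (rule borel_measurable_eq[OF g c])
  have d: "(\<lambda>x. e2ennreal (g x - f x)) \<in> borel_measurable M"
    by (rule measurable_compose[OF borel_measurable_ereal_diff[OF g f] measurable_e2ennreal])
  show ?thesis unfolding G_def
    by (intro measurable_If d s1 s2 measurable_const) simp_all
qed

lemma sh_measurable[measurable]: "sh \<in> measurable (perc p) (perc p)"
  unfolding sh_def perc_def
proof (rule measurable_restrict)
  fix s assume "s \<in> Lat"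
  then have "(fst s, snd s + 2) \<in> Lat" using Lat_shift[of "fst s" "snd s"] by simp
  then show "(\<lambda>x. x (fst s, snd s + 2)) \<in> measurable (Pi\<^sub>M Lat (\<lambda>_. measure_pmf (bernoulli_pmf p))) (measure_pmf (bernoulli_pmf p))"
    by (rule measurable_component_singleton)
qed

lemma distr_sh: "distr (perc p) (perc p) sh = perc p"
proof -
  have "distr (PiM Lat (\<lambda>_. measure_pmf (bernoulli_pmf p))) (\<Pi>\<^sub>M i\<in>Lat. measure_pmf (bernoulli_pmf p))
      (\<lambda>\<omega>. \<lambda>n\<in>Lat. \<omega> ((\<lambda>s. (fst s, snd s + 2)) n)) = (\<Pi>\<^sub>M i\<in>Lat. measure_pmf (bernoulli_pmf p))"
  proof (rule distr_PiM_reindex)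
    show "prob_space (measure_pmf (bernoulli_pmf p))" for i by (rule prob_space_measure_pmf)
    show "inj_on (\<lambda>s. (fst s, snd s + 2)) Lat" by (auto simp: inj_on_def)
    show "(\<lambda>s. (fst s, snd s + 2)) \<in> Lat \<rightarrow> Lat" using Lat_shift by auto
  qed
  then show ?thesis unfolding perc_def sh_def by simp
qed

lemma prob_space_perc: "prob_space (perc p)"
  unfolding perc_def by (rule prob_space_PiM) (rule prob_space_measure_pmf)



abbreviation "Bm p \<equiv> measure_pmf (bernoulli_pmf p)"

lemma Lat_insert: "Lat = insert (0,0) (Lat - {(0,0)})"
  using o_Lat by auto

lemma nn_integral_bern_ind:
  assumes "0 \<le> p" "p \<le> 1"
  shows "(\<integral>\<^sup>+ x. (if x then 1 else 0) \<partial>Bm p) = ennreal p"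
proof -
  have "(\<integral>\<^sup>+ x. (if x then 1 else 0) \<partial>Bm p) = (\<integral>\<^sup>+ x. indicator {True} x \<partial>Bm p)"
    by (intro nn_integral_cong) (auto simp: indicator_def)
  also have "\<dots> = emeasure (Bm p) {True}" by simp
  also have "\<dots> = ennreal p" using assms by (simp add: emeasure_pmf_single)
  finally show ?thesis .
qed

lemma indep_o:
  fixes f :: "(int \<times> int \<Rightarrow> bool) \<Rightarrow> ennreal"
  assumes p: "0 \<le> p" "p \<le> 1"
    and f[measurable]: "f \<in> borel_measurable (perc p)"
    and inv: "\<And>\<omega> b. f (fun_upd \<omega> (0,0) b) = f \<omega>"
  shows "(\<integral>\<^sup>+ \<omega>. (if \<omega> (0,0) then 1 else 0) * f \<omega> \<partial>perc p) = ennreal p * (\<integral>\<^sup>+ \<omega>. f \<omega> \<partial>perc p)"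
proof -
  define L' where "L' = Lat - {(0,0)}"
  define N where "N = PiM L' (\<lambda>_. Bm p)"
  define T where "T = (\<lambda>z::bool \<times> (int \<times> int \<Rightarrow> bool). fun_upd (snd z) (0,0) (fst z))"
  interpret N: prob_space N unfolding N_def by (rule prob_space_PiM) (rule prob_space_measure_pmf)
  interpret B: prob_space "Bm p" by (rule prob_space_measure_pmf)
  have percL: "perc p = PiM (insert (0,0) L') (\<lambda>_. Bm p)"
    unfolding perc_def L'_def using Lat_insert by simp
  have D: "distr (Bm p \<Otimes>\<^sub>M N) (perc p) T = perc p"
  proof -
    have "distr (Bm p \<Otimes>\<^sub>M (\<Pi>\<^sub>M i\<in>L'. Bm p)) (\<Pi>\<^sub>M i\<in>insert (0,0) L'. Bm p) (\<lambda>(x, X). X((0,0) := x)) =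
        (\<Pi>\<^sub>M i\<in>insert (0,0) L'. Bm p)"
      by (rule distr_pair_PiM_eq_PiM) (rule prob_space_measure_pmf)+
    moreover have "(\<lambda>(x, X). X((0,0) := x)) = T" unfolding T_def by auto
    ultimately show ?thesis unfolding percL N_def by simp
  qed
  have Tm: "T \<in> measurable (Bm p \<Otimes>\<^sub>M N) (perc p)"
    unfolding T_def percL N_def
    by (rule measurable_fun_upd[where J=L']) auto
  define h where "h = (\<lambda>X. f (fun_upd X (0,0) True))"
  have hm: "h \<in> borel_measurable N"
  proof -
    have "(\<lambda>X. fun_upd X (0,0) True) \<in> measurable N (perc p)"
      unfolding percL N_def by (rule measurable_fun_upd[where J=L']) auto
    then show ?thesis unfolding h_def by (rule measurable_compose) (rule f)
  qed
  have fT: "f (T z) = h (snd z)" for z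
    unfolding T_def h_def by (metis fun_upd_upd inv)
  have I1: "(\<integral>\<^sup>+ \<omega>. f \<omega> \<partial>perc p) = (\<integral>\<^sup>+ \<omega>. h \<omega> \<partial>N)"
  proof -
    have "(\<integral>\<^sup>+ \<omega>. f \<omega> \<partial>perc p) = (\<integral>\<^sup>+ z. f (T z) \<partial>(Bm p \<Otimes>\<^sub>M N))"
      by (subst D[symmetric], rule nn_integral_distr[OF Tm]) (simp add: D)
    also have "\<dots> = (\<integral>\<^sup>+ z. h (snd z) \<partial>(Bm p \<Otimes>\<^sub>M N))" by (simp add: fT)
    also have "\<dots> = (\<integral>\<^sup>+ x. \<integral>\<^sup>+ y. h (snd (x, y)) \<partial>N \<partial>Bm p)"
      by (rule N.nn_integral_fst[symmetric]) (use hm in simp)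
    also have "\<dots> = (\<integral>\<^sup>+ x. (\<integral>\<^sup>+ y. h y \<partial>N) \<partial>Bm p)" by simp
    also have "\<dots> = (\<integral>\<^sup>+ y. h y \<partial>N)" by (simp add: prob_space.emeasure_space_1[OF prob_space_measure_pmf])
    finally show ?thesis .
  qed
  have gm: "(\<lambda>\<omega>. (if \<omega> (0,0) then 1 else 0) * f \<omega> :: ennreal) \<in> borel_measurable (perc p)"
  proof -
    have "Measurable.pred (perc p) (\<lambda>\<omega>. \<omega> (0,0))" using o_Lat by (rule pred_open)
    then show ?thesis by measurable
  qed
  have "(\<integral>\<^sup>+ \<omega>. (if \<omega> (0,0) then 1 else 0) * f \<omega> \<partial>perc p)
      = (\<integral>\<^sup>+ z. (if T z (0,0) then 1 else 0) * f (T z) \<partial>(Bm p \<Otimes>\<^sub>M N))"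
    by (subst D[symmetric], rule nn_integral_distr[OF Tm]) (simp add: D gm)
  also have "\<dots> = (\<integral>\<^sup>+ z. (if fst z then 1 else 0) * h (snd z) \<partial>(Bm p \<Otimes>\<^sub>M N))"
  proof (rule nn_integral_cong)
    fix z :: "bool \<times> (int \<times> int \<Rightarrow> bool)"
    have "T z (0,0) = fst z" unfolding T_def by simp
    then show "(if T z (0,0) then 1 else 0) * f (T z) = (if fst z then 1 else 0) * h (snd z)"
      by (simp only: fT)
  qed
  also have "\<dots> = (\<integral>\<^sup>+ x. \<integral>\<^sup>+ y. (if fst (x, y) then 1 else 0) * h (snd (x, y)) \<partial>N \<partial>Bm p)"
    by (rule N.nn_integral_fst[symmetric]) (use hm in simp)
  also have "\<dots> = (\<integral>\<^sup>+ x. (if x then 1 else 0) * (\<integral>\<^sup>+ y. h y \<partial>N) \<partial>Bm p)"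
    by (simp add: nn_integral_cmult hm)
  also have "\<dots> = (\<integral>\<^sup>+ x. (if x then 1 else 0) \<partial>Bm p) * (\<integral>\<^sup>+ y. h y \<partial>N)"
    by (rule nn_integral_multc) simp
  also have "\<dots> = ennreal p * (\<integral>\<^sup>+ \<omega>. f \<omega> \<partial>perc p)"
    using nn_integral_bern_ind[OF p] I1 by simp
  finally show ?thesis .
qed



lemma sets_open_gen:
  assumes "s \<in> I"
  shows "{y \<in> space (PiM I (\<lambda>_. Bm p)). y s} \<in> sets (PiM I (\<lambda>_. Bm p))"
proof -
  have m: "(\<lambda>\<omega>. \<omega> s) \<in> measurable (PiM I (\<lambda>_. Bm p)) (Bm p)"
    using assms by (rule measurable_component_singleton)
  have "(\<lambda>\<omega>. \<omega> s) -` {True} \<inter> space (PiM I (\<lambda>_. Bm p)) \<in> sets (PiM I (\<lambda>_. Bm p))"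
    by (rule measurable_sets[OF m]) simp
  moreover have "(\<lambda>\<omega>. \<omega> s) -` {True} \<inter> space (PiM I (\<lambda>_. Bm p)) = {y \<in> space (PiM I (\<lambda>_. Bm p)). y s}" by auto
  ultimately show ?thesis by simp
qed

lemma prob_all_open:
  assumes p: "0 \<le> p" "p \<le> 1" and J: "J \<subseteq> Lat" "finite J"
  shows "measure (perc p) {\<omega> \<in> space (perc p). \<forall>s\<in>J. \<omega> s} = p ^ card J"
proof -
  have eq: "{\<omega> \<in> space (perc p). \<forall>s\<in>J. \<omega> s} = prod_emb Lat (\<lambda>_. Bm p) J (Pi\<^sub>E J (\<lambda>_. {True}))"
    unfolding perc_def by (auto simp: prod_emb_iff restrict_PiE_iff space_PiM PiE_def fun_eq_iff restrict_def) metis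
  have "emeasure (perc p) {\<omega> \<in> space (perc p). \<forall>s\<in>J. \<omega> s} = (\<Prod>s\<in>J. emeasure (Bm p) {True})"
    unfolding eq unfolding perc_def by (rule emeasure_PiM_emb) (use J in \<open>auto intro: prob_space_measure_pmf\<close>)
  also have "\<dots> = ennreal (p ^ card J)" using p by (simp add: emeasure_pmf_single prod_ennreal[symmetric] ennreal_power)
  finally have E: "emeasure (perc p) {\<omega> \<in> space (perc p). \<forall>s\<in>J. \<omega> s} = ennreal (p ^ card J)" .
  interpret P: prob_space "perc p" by (rule prob_space_perc)
  from E have "ennreal (measure (perc p) {\<omega> \<in> space (perc p). \<forall>s\<in>J. \<omega> s}) = ennreal (p ^ card J)"
    by (simp add: P.emeasure_eq_measure)
  then show ?thesis
    using p by (subst (asm) ennreal_inj) auto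
qed

lemma indep_coords:
  "prob_space.indep_vars (perc p) (\<lambda>_. Bm p) (\<lambda>s \<omega>. \<omega> s) Lat"
proof -
  interpret P: prob_space "perc p" by (rule prob_space_perc)
  have rv: "(\<lambda>\<omega>. \<omega> s) \<in> measurable (perc p) (Bm p)" if "s \<in> Lat" for s
    unfolding perc_def using that by (rule measurable_component_singleton)
  have "distr (perc p) (\<Pi>\<^sub>M i\<in>Lat. Bm p) (\<lambda>x. \<lambda>i\<in>Lat. x i) = distr (perc p) (perc p) (\<lambda>x. x)"
    by (rule distr_cong) (auto simp: perc_def space_PiM PiE_def extensional_restrict)
  also have "\<dots> = (\<Pi>\<^sub>M i\<in>Lat. distr (perc p) (Bm p) (\<lambda>\<omega>. \<omega> i))"
    unfolding perc_def distr_id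
    by (rule PiM_cong) (auto intro!: distr_PiM_component[symmetric] prob_space_measure_pmf)
  finally show ?thesis
    using o_Lat rv by (subst P.indep_vars_iff_distr_eq_PiM') auto
qed

lemma prob_no_path:
  assumes p: "0 \<le> p" "p \<le> 1" and K: "K \<ge> 1"
    and S: "\<And>k. k < K \<Longrightarrow> S k \<subseteq> Lat" "\<And>k. k < K \<Longrightarrow> finite (S k)" "\<And>k. k < K \<Longrightarrow> card (S k) = m"
    and dj: "disjoint_family_on S {..<K}"
  shows "measure (perc p) {\<omega> \<in> space (perc p). \<forall>k<K. \<not> (\<forall>s\<in>S k. \<omega> s)} = (1 - p ^ m) ^ K"
proof -
  interpret P: prob_space "perc p" by (rule prob_space_perc)
  have K0: "{..<K} \<noteq> {}" using K by (metis One_nat_def lessThan_iff less_eq_Suc_le empty_iff)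
  have ind: "P.indep_vars (\<lambda>k. PiM (S k) (\<lambda>_. Bm p)) (\<lambda>k \<omega>. restrict (\<lambda>s. \<omega> s) (S k)) {..<K}"
    by (rule P.indep_vars_restrict[OF indep_coords]) (use S dj in auto)
  define A where "A k = {y \<in> space (PiM (S k) (\<lambda>_. Bm p)). \<not> (\<forall>s\<in>S k. y s)}" for k
  have A: "A k \<in> sets (PiM (S k) (\<lambda>_. Bm p))" if "k \<in> {..<K}" for k
  proof -
    have "{y \<in> space (PiM (S k) (\<lambda>_. Bm p)). \<forall>s\<in>S k. y s} \<in> sets (PiM (S k) (\<lambda>_. Bm p))"
      using S(2)[of k] that sets_open_gen[of _ "S k" p]
      by (intro sets.sets_Collect_finite_All) auto
    then have "space (PiM (S k) (\<lambda>_. Bm p)) - {y \<in> space (PiM (S k) (\<lambda>_. Bm p)). \<forall>s\<in>S k. y s} \<in> sets (PiM (S k) (\<lambda>_. Bm p))"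
      by auto
    moreover have "space (PiM (S k) (\<lambda>_. Bm p)) - {y \<in> space (PiM (S k) (\<lambda>_. Bm p)). \<forall>s\<in>S k. y s} = A k"
      unfolding A_def by auto
    ultimately show ?thesis by simp
  qed
  have pre: "(\<lambda>\<omega>. restrict (\<lambda>s. \<omega> s) (S k)) -` A k \<inter> space (perc p) = space (perc p) - {\<omega> \<in> space (perc p). \<forall>s\<in>S k. \<omega> s}" for k
    unfolding A_def perc_def by (auto simp: space_PiM PiE_iff)
  have "P.prob (\<Inter>k\<in>{..<K}. (\<lambda>\<omega>. restrict (\<lambda>s. \<omega> s) (S k)) -` A k \<inter> space (perc p))
      = (\<Prod>k\<in>{..<K}. P.prob ((\<lambda>\<omega>. restrict (\<lambda>s. \<omega> s) (S k)) -` A k \<inter> space (perc p)))"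
  proof (rule P.indep_varsD[OF ind])
    have "0 \<in> {..<K}" using K by simp
    then show "{..<K} \<noteq> {}" by blast
  qed (use A in auto)
  also have "\<dots> = (\<Prod>k\<in>{..<K}. 1 - p ^ m)"
  proof (rule prod.cong[OF refl])
    fix k assume k: "k \<in> {..<K}"
    have ev: "{\<omega> \<in> space (perc p). \<forall>s\<in>S k. \<omega> s} \<in> P.events"
      using S(1,2)[of k] k pred_open[of _ p]
      by (intro sets.sets_Collect_finite_All) (auto simp: Measurable.pred_def)
    show "P.prob ((\<lambda>\<omega>. restrict (\<lambda>s. \<omega> s) (S k)) -` A k \<inter> space (perc p)) = 1 - p ^ m"
      unfolding pre using P.prob_compl[OF ev] prob_all_open[OF p S(1,2)] S(3) k by simp
  qed
  also have "\<dots> = (1 - p ^ m) ^ K" by simp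
  also have "(\<Inter>k\<in>{..<K}. (\<lambda>\<omega>. restrict (\<lambda>s. \<omega> s) (S k)) -` A k \<inter> space (perc p))
      = {\<omega> \<in> space (perc p). \<forall>k<K. \<not> (\<forall>s\<in>S k. \<omega> s)}"
    unfolding pre using K0 by auto
  finally show ?thesis .
qed



lemma tail_bound:
  assumes p: "0 \<le> p" "p \<le> 1" and n: "n \<ge> 1" and K: "K \<ge> 1"
  shows "emeasure (perc p) {\<omega> \<in> space (perc p). u \<omega> Cset n < ereal (- (2 + 2 * (real n + 1) * real K))}
          \<le> ennreal ((1 - p ^ n) ^ K)"
proof -
  interpret P: prob_space "perc p" by (rule prob_space_perc)
  define jk where "jk k = -2 - 2 * (int n + 1) * int k" for k :: nat
  define S where "S k = (\<lambda>i. (i, jk k + i)) ` {0..<int n}" for k :: nat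
  have even_jk: "even (jk k)" for k unfolding jk_def by simp
  have SL: "S k \<subseteq> Lat" for k unfolding S_def Lat_def using even_jk[of k] by auto
  have Sf: "finite (S k)" for k unfolding S_def by simp
  have Sc: "card (S k) = n" for k
  proof -
    have "inj_on (\<lambda>i. (i, jk k + i)) {0..<int n}" by (auto simp: inj_on_def)
    then show ?thesis unfolding S_def by (simp add: card_image)
  qed
  have jk_inj: "jk k = jk k' \<Longrightarrow> k = k'" for k k'
  proof -
    assume "jk k = jk k'"
    then have "(int n + 1) * int k = (int n + 1) * int k'" unfolding jk_def by simp
    then have "int k = int k'" by (subst (asm) mult_left_cancel) auto
    then show "k = k'" by simp
  qed
  have dj: "disjoint_family_on S {..<K}"
    unfolding disjoint_family_on_def
  proof (intro ballI impI)
    fix k k' :: nat assume "k \<noteq> k'"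
    then show "S k \<inter> S k' = {}" unfolding S_def using jk_inj by auto
  qed
  define E where "E = {\<omega> \<in> space (perc p). \<forall>k<K. \<not> (\<forall>s\<in>S k. \<omega> s)}"
  have Emeas: "E \<in> sets (perc p)"
  proof -
    have A: "{\<omega> \<in> space (perc p). \<forall>s\<in>S k. \<omega> s} \<in> sets (perc p)" for k
    proof (rule sets.sets_Collect_finite_All[where S="S k" and P="\<lambda>s \<omega>. \<omega> s"])
      fix s assume "s \<in> S k"
      then have "s \<in> Lat" using SL by auto
      then have "Measurable.pred (perc p) (\<lambda>\<omega>. \<omega> s)" by (rule pred_open)
      then show "{\<omega> \<in> space (perc p). \<omega> s} \<in> sets (perc p)"
        unfolding Measurable.pred_def .
    qed (rule Sf)
    have "{\<omega> \<in> space (perc p). \<forall>k\<in>{..<K}. \<not> (\<forall>s\<in>S k. \<omega> s)} \<in> sets (perc p)"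
    proof (rule sets.sets_Collect_finite_All[where S="{..<K}" and P="\<lambda>k \<omega>. \<not> (\<forall>s\<in>S k. \<omega> s)"])
      fix k show "{\<omega> \<in> space (perc p). \<not> (\<forall>s\<in>S k. \<omega> s)} \<in> sets (perc p)"
        by (rule sets.sets_Collect_neg[OF A])
    qed simp
    moreover have "E = {\<omega> \<in> space (perc p). \<forall>k\<in>{..<K}. \<not> (\<forall>s\<in>S k. \<omega> s)}"
      unfolding E_def by blast
    ultimately show ?thesis by simp
  qed
  have sub: "{\<omega> \<in> space (perc p). u \<omega> Cset n < ereal (- (2 + 2 * (real n + 1) * real K))} \<subseteq> E"
  proof
    fix \<omega> assume \<omega>: "\<omega> \<in> {\<omega> \<in> space (perc p). u \<omega> Cset n < ereal (- (2 + 2 * (real n + 1) * real K))}"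
    then have lt: "u \<omega> Cset n < ereal (- (2 + 2 * (real n + 1) * real K))" by simp
    have "\<not> (\<forall>s\<in>S k. \<omega> s)" if k: "k < K" for k
    proof
    assume op: "\<forall>s\<in>S k. \<omega> s"
    have "R \<omega> (0, jk k) (int n, jk k + int n)"
      by (rule straight_path[OF even_jk]) (use op in \<open>auto simp: S_def\<close>)
    moreover have "(0, jk k) \<in> Cset"
    proof -
      have "0 \<le> (int n + 1) * int k" by simp
      then have "jk k < 0" unfolding jk_def by linarith
      then show ?thesis unfolding Cset_iff using even_jk[of k] by simp
    qed
    ultimately have "ereal (real_of_int (jk k + int n)) \<le> u \<omega> Cset n" by (intro u_ge)
    moreover have "real_of_int (jk k + int n) \<ge> - (2 + 2 * (real n + 1) * real K)"
    proof -
      have "real k \<le> real K" using k by simp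
      then have "2 * (real n + 1) * real k \<le> 2 * (real n + 1) * real K" by (intro mult_left_mono) auto
      moreover have "real_of_int (jk k + int n) = -2 - 2 * (real n + 1) * real k + real n"
        unfolding jk_def by simp
      ultimately show ?thesis by linarith
    qed
    ultimately have "ereal (- (2 + 2 * (real n + 1) * real K)) \<le> u \<omega> Cset n"
      by (meson ereal_less_eq(3) order_trans)
    then show False using lt by simp
  qed
  then show "\<omega> \<in> E" using \<omega> unfolding E_def by auto
  qed
  have "emeasure (perc p) {\<omega> \<in> space (perc p). u \<omega> Cset n < ereal (- (2 + 2 * (real n + 1) * real K))} \<le> emeasure (perc p) E"
    by (rule emeasure_mono[OF sub Emeas])
  also have "\<dots> = ennreal (measure (perc p) E)"
    using P.emeasure_eq_measure by blast
  also have "measure (perc p) E = (1 - p ^ n) ^ K"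
    unfolding E_def by (rule prob_no_path[OF p K SL Sf Sc dj])
  finally show ?thesis .
qed



definition trunc :: "real \<Rightarrow> ereal \<Rightarrow> ennreal" where
  "trunc M e = e2ennreal (max e (ereal (-M)) + ereal M)"

lemma trunc_measurable[measurable]:
  assumes f: "f \<in> borel_measurable N"
  shows "(\<lambda>x. trunc M (f x)) \<in> borel_measurable N"
proof -
  have "(\<lambda>x. max (f x) (ereal (-M))) \<in> borel_measurable N"
    using f by (intro borel_measurable_max) simp_all
  then have "(\<lambda>x. max (f x) (ereal (-M)) + ereal M) \<in> borel_measurable N"
    by (intro borel_measurable_ereal_add) simp_all
  then show ?thesis unfolding trunc_def
    by (rule measurable_compose[OF _ measurable_e2ennreal])
qed

lemma key_ineq:
  assumes "a \<le> a' + 2" "a' < \<infinity>" "0 \<le> M"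
  shows "trunc M a' + 2 \<le> trunc M a + G a (a' + 2) + (if a' < ereal (-M) then 2 else 0)"
proof (cases "a' < ereal (-M)")
  case True
  then have "max a' (ereal (-M)) = ereal (-M)" by (simp add: max_absorb2)
  then have "max a' (ereal (-M)) + ereal M = ereal 0" by simp
  then have "trunc M a' = 0" unfolding trunc_def by simp
  then show ?thesis using True by (simp add: add_increasing)
next
  case False
  then obtain r where r: "a' = ereal r" "r \<ge> -M" using assms(2) by (cases a') auto
  have t': "trunc M a' = ennreal (r + M)"
    unfolding trunc_def using r by (simp add: max_def)
  show ?thesis
  proof (cases "a = -\<infinity>")
    case True
    then have "G a (a' + 2) = \<infinity>" using r unfolding G_def by simp
    then show ?thesis by simp
  next
    case False
    then obtain x where x: "a = ereal x" using assms(1) r by (cases a) auto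
    have xr: "x \<le> r + 2" using assms(1) x r by simp
    have t: "trunc M a = ennreal (max x (-M) + M)"
      unfolding trunc_def using x by (simp add: max_def)
    have g: "G a (a' + 2) = ennreal (r + 2 - x)"
      unfolding G_def using x r by simp
    have "trunc M a' + 2 = ennreal (r + M + 2)"
    proof -
      have "ennreal (r + M + 2) = ennreal (r + M) + ennreal 2" using r by (intro ennreal_plus) auto
      then show ?thesis unfolding t' by simp
    qed
    also have "\<dots> \<le> ennreal (max x (-M) + M + (r + 2 - x))"
      by (rule ennreal_leI) auto
    also have "\<dots> = trunc M a + G a (a' + 2)"
      unfolding t g using xr assms(3) by (subst ennreal_plus) auto
    finally show ?thesis using add_increasing2 by (metis add.commute add_increasing zero_le)
  qed
qed



abbreviation "Dfun n \<omega> \<equiv> G (u \<omega> Cset n) (u \<omega> H2 n)"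

lemma Cset_sub_H2: "Cset \<subseteq> H2"
  unfolding H2_eq by auto

lemma ED_step:
  assumes p: "0 \<le> p" "p \<le> 1" and n: "n \<ge> 1" and K: "K \<ge> 1"
  shows "2 \<le> (\<integral>\<^sup>+ \<omega>. Dfun n \<omega> \<partial>perc p) + 2 * ennreal ((1 - p ^ n) ^ K)"
proof -
  interpret P: prob_space "perc p" by (rule prob_space_perc)
  define M where "M = 2 + 2 * (real n + 1) * real K"
  have M0: "0 \<le> M" unfolding M_def by simp
  define T where "T \<omega> = trunc M (u \<omega> Cset n)" for \<omega>
  have Tm[measurable]: "T \<in> borel_measurable (perc p)" unfolding T_def by measurable
  have Dm[measurable]: "(\<lambda>\<omega>. Dfun n \<omega>) \<in> borel_measurable (perc p)" by measurable
  define Ev where "Ev = {\<omega> \<in> space (perc p). u (sh \<omega>) Cset n < ereal (-M)}"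
  have Ev_sets[measurable]: "Ev \<in> sets (perc p)" unfolding Ev_def by measurable
  have pt: "T (sh \<omega>) + 2 \<le> T \<omega> + Dfun n \<omega> + 2 * indicator Ev \<omega>" if \<omega>: "\<omega> \<in> space (perc p)" for \<omega>
  proof -
    have h2: "u \<omega> H2 n = u (sh \<omega>) Cset n + 2" by (rule u_H2_sh)
    have le: "u \<omega> Cset n \<le> u (sh \<omega>) Cset n + 2" using u_mono[OF Cset_sub_H2] h2 by metis
    have fin: "u (sh \<omega>) Cset n < \<infinity>" by (rule u_fin[where c=0]) (use Cset_bound in auto)
    have ind: "(if u (sh \<omega>) Cset n < ereal (-M) then 2 else 0) = 2 * (indicator Ev \<omega> :: ennreal)"
      using \<omega> unfolding Ev_def by (auto simp: indicator_def)
    show ?thesis using key_ineq[OF le fin M0] unfolding T_def h2 ind .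
  qed
  have "(\<integral>\<^sup>+ \<omega>. T \<omega> \<partial>perc p) + 2 = (\<integral>\<^sup>+ \<omega>. T (sh \<omega>) \<partial>perc p) + (\<integral>\<^sup>+ \<omega>. 2 \<partial>perc p)"
  proof -
    have "(\<integral>\<^sup>+ \<omega>. T \<omega> \<partial>perc p) = (\<integral>\<^sup>+ \<omega>. T \<omega> \<partial>distr (perc p) (perc p) sh)" by (simp add: distr_sh)
    also have "\<dots> = (\<integral>\<^sup>+ \<omega>. T (sh \<omega>) \<partial>perc p)"
      by (rule nn_integral_distr) (simp_all add: distr_sh)
    finally show ?thesis by (simp add: P.emeasure_space_1)
  qed
  also have "\<dots> = (\<integral>\<^sup>+ \<omega>. T (sh \<omega>) + 2 \<partial>perc p)"
    by (rule nn_integral_add[symmetric]) simp_all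
  also have "\<dots> \<le> (\<integral>\<^sup>+ \<omega>. T \<omega> + Dfun n \<omega> + 2 * indicator Ev \<omega> \<partial>perc p)"
    by (rule nn_integral_mono) (rule pt)
  also have "\<dots> = (\<integral>\<^sup>+ \<omega>. T \<omega> \<partial>perc p) + ((\<integral>\<^sup>+ \<omega>. Dfun n \<omega> \<partial>perc p) + 2 * emeasure (perc p) Ev)"
  proof -
    have "(\<integral>\<^sup>+ \<omega>. T \<omega> + Dfun n \<omega> + 2 * indicator Ev \<omega> \<partial>perc p)
        = (\<integral>\<^sup>+ \<omega>. T \<omega> + Dfun n \<omega> \<partial>perc p) + (\<integral>\<^sup>+ \<omega>. 2 * indicator Ev \<omega> \<partial>perc p)"
      by (rule nn_integral_add) simp_all
    also have "(\<integral>\<^sup>+ \<omega>. T \<omega> + Dfun n \<omega> \<partial>perc p) = (\<integral>\<^sup>+ \<omega>. T \<omega> \<partial>perc p) + (\<integral>\<^sup>+ \<omega>. Dfun n \<omega> \<partial>perc p)"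
      by (rule nn_integral_add) simp_all
    also have "(\<integral>\<^sup>+ \<omega>. 2 * indicator Ev \<omega> \<partial>perc p) = 2 * emeasure (perc p) Ev"
      by (rule nn_integral_cmult_indicator) simp
    finally show ?thesis by (simp add: add.assoc)
  qed
  finally have main: "(\<integral>\<^sup>+ \<omega>. T \<omega> \<partial>perc p) + 2 \<le> (\<integral>\<^sup>+ \<omega>. T \<omega> \<partial>perc p) + ((\<integral>\<^sup>+ \<omega>. Dfun n \<omega> \<partial>perc p) + 2 * emeasure (perc p) Ev)" .
  have Tfin: "(\<integral>\<^sup>+ \<omega>. T \<omega> \<partial>perc p) \<noteq> \<infinity>"
  proof -
    have "T \<omega> \<le> ennreal (real n + M)" for \<omega>
    proof -
      have "u \<omega> Cset n \<le> ereal (real_of_int (0 + int n))" by (rule u_le) (use Cset_bound in auto)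
      then have "max (u \<omega> Cset n) (ereal (-M)) + ereal M \<le> ereal (real n + M)"
        using M0 by (cases "u \<omega> Cset n") (auto simp: max_def)
      then have "T \<omega> \<le> e2ennreal (ereal (real n + M))" unfolding T_def trunc_def by (rule e2ennreal_mono)
      then show ?thesis by simp
    qed
    then have "(\<integral>\<^sup>+ \<omega>. T \<omega> \<partial>perc p) \<le> (\<integral>\<^sup>+ \<omega>. ennreal (real n + M) \<partial>perc p)"
      by (intro nn_integral_mono) simp
    also have "\<dots> = ennreal (real n + M)" by (simp add: P.emeasure_space_1)
    finally have "(\<integral>\<^sup>+ \<omega>. T \<omega> \<partial>perc p) < \<infinity>"
      using ennreal_less_top[of "real n + M"] by (simp add: le_less_trans)
    then show ?thesis by simp
  qed
  have ev: "emeasure (perc p) Ev \<le> ennreal ((1 - p ^ n) ^ K)"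
  proof -
    have "emeasure (perc p) Ev = emeasure (distr (perc p) (perc p) sh) {\<omega> \<in> space (perc p). u \<omega> Cset n < ereal (-M)}"
    proof (subst emeasure_distr)
      show "sh \<in> measurable (perc p) (perc p)" by simp
      show "{\<omega> \<in> space (perc p). u \<omega> Cset n < ereal (-M)} \<in> sets (perc p)" by measurable
      show "emeasure (perc p) Ev = emeasure (perc p) (sh -` {\<omega> \<in> space (perc p). u \<omega> Cset n < ereal (-M)} \<inter> space (perc p))"
        unfolding Ev_def using measurable_space[OF sh_measurable[of p]] by (intro arg_cong[where f="emeasure (perc p)"]) auto
    qed
    also have "\<dots> = emeasure (perc p) {\<omega> \<in> space (perc p). u \<omega> Cset n < ereal (-M)}" by (simp add: distr_sh)
    also have "\<dots> \<le> ennreal ((1 - p ^ n) ^ K)" unfolding M_def by (rule tail_bound[OF p n K])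
    finally show ?thesis .
  qed
  from main Tfin have "2 \<le> (\<integral>\<^sup>+ \<omega>. Dfun n \<omega> \<partial>perc p) + 2 * emeasure (perc p) Ev"
    by (simp add: ennreal_add_left_cancel_le)
  also have "\<dots> \<le> (\<integral>\<^sup>+ \<omega>. Dfun n \<omega> \<partial>perc p) + 2 * ennreal ((1 - p ^ n) ^ K)"
    by (intro add_left_mono mult_left_mono ev) simp
  finally show ?thesis .
qed



lemma ED:
  assumes p: "0 < p" "p \<le> 1" and n: "n \<ge> 1"
  shows "2 \<le> (\<integral>\<^sup>+ \<omega>. Dfun n \<omega> \<partial>perc p)"
proof (cases "(\<integral>\<^sup>+ \<omega>. Dfun n \<omega> \<partial>perc p) = \<infinity>")
  case True then show ?thesis by simp
next
  case False
  then obtain d where d: "(\<integral>\<^sup>+ \<omega>. Dfun n \<omega> \<partial>perc p) = ennreal d" "0 \<le> d"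
    by (cases "(\<integral>\<^sup>+ \<omega>. Dfun n \<omega> \<partial>perc p)") auto
  show ?thesis
  proof (rule ccontr)
    assume "\<not> 2 \<le> (\<integral>\<^sup>+ \<omega>. Dfun n \<omega> \<partial>perc p)"
    then have d2: "d < 2" using d by (simp add: not_le ennreal_less_iff)
    define q where "q = 1 - p ^ n"
    have pn: "0 < p ^ n" "p ^ n \<le> 1" using p by (auto simp: power_le_one)
    have q: "0 \<le> q" "q < 1" unfolding q_def using pn by auto
    obtain K where K: "q ^ K < (2 - d) / 2" using real_arch_pow_inv[of "(2 - d) / 2" q] d2 q by auto
    have K1: "K \<ge> 1"
    proof (rule ccontr)
      assume "\<not> K \<ge> 1" then have "K = 0" by simp
      then show False using K d by simp
    qed
    have "2 \<le> ennreal d + 2 * ennreal (q ^ K)"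
      using ED_step[OF less_imp_le[OF p(1)] p(2) n K1] d unfolding q_def by simp
    also have "\<dots> = ennreal (d + 2 * q ^ K)"
      using d q by (simp add: ennreal_plus ennreal_mult)
    finally have "2 \<le> d + 2 * q ^ K"
      by (simp add: ennreal_le_iff2)
    then show False using K by simp
  qed
qed



lemma o_bound: "z \<in> {(0::int,0::int)} \<Longrightarrow> 0 \<le> fst z \<and> snd z \<le> 0"
  by auto

lemma incr_anti:
  assumes "B \<subseteq> A" "A \<subseteq> Cset"
  shows "incr \<omega> A n \<le> incr \<omega> B n"
proof -
  have a: "u \<omega> B n \<le> u \<omega> A n" by (rule u_mono[OF assms(1)])
  have b: "u \<omega> A n < \<infinity>" by (rule u_fin[where c=0]) (use assms Cset_bound in auto)
  have c: "u \<omega> {(0,0)} n < \<infinity>" by (rule u_fin[where c=0]) auto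
  show ?thesis unfolding incr_G u_Un using G_anti[OF a b c] .
qed

lemma incr_n0:
  assumes "A \<subseteq> Cset"
  shows "2 \<le> incr \<omega> A 0"
proof -
  have "u \<omega> A 0 \<le> -2"
    unfolding u_def xi_R
  proof (rule Sup_least, clarify)
    fix x z assume z: "z \<in> A" "R \<omega> z (int 0, x)"
    have "z \<in> Cset" using z assms by auto
    then have "0 \<le> fst z" using Cset_bound by auto
    then have "(int 0, x) = z" using R_fst[OF z(2)] by auto
    then have "(0, x) \<in> Cset" using \<open>z \<in> Cset\<close> by simp
    then have "x < 0" "even x" unfolding Cset_iff by auto
    then have "x \<le> -2" by presburger
    then show "ereal (real_of_int x) \<le> -2" by simp
  qed
  moreover have "ereal (real_of_int 0) \<le> u \<omega> (A \<union> {(0,0)}) 0"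
    by (rule u_ge[of "(0,0)"]) (auto intro: R.R0 o_Lat)
  ultimately show ?thesis unfolding incr_G by (intro G_ge2) (auto simp: zero_ereal_def)
qed

abbreviation "Phi n \<omega> \<equiv> G (u \<omega> Cset n) (u \<omega> H3 n)"

lemma incr_C_eq:
  assumes n: "n \<ge> 1"
  shows "incr \<omega> Cset n = (if \<omega> (0,0) then 1 else 0) * Phi n \<omega>"
proof (cases "\<omega> (0,0)")
  case True
  have "u \<omega> (Cset \<union> {(0,0)}) n = u \<omega> H3 n"
    unfolding u_def using xi_o_open[of \<omega> n, OF True n] by simp
  then show ?thesis using True unfolding incr_G by simp
next
  case False
  have "u \<omega> (Cset \<union> {(0,0)}) n = u \<omega> Cset n"
    unfolding u_def using xi_o_closed[of \<omega> n, OF False n] by simp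
  moreover have "u \<omega> Cset n < \<infinity>" by (rule u_fin[where c=0]) (use Cset_bound in auto)
  ultimately show ?thesis using False unfolding incr_G by (simp add: G_refl)
qed

lemma Phi_inv: "Phi n (fun_upd \<omega> (0,0) b) = Phi n \<omega>"
proof -
  have "u (fun_upd \<omega> (0,0) b) Cset n = u \<omega> Cset n"
    by (rule u_upd) (auto simp: Cset_iff dest: Cset_bound)
  moreover have "u (fun_upd \<omega> (0,0) b) H3 n = u \<omega> H3 n"
    by (rule u_upd) (auto simp: H3_def Cset_iff dest: Cset_bound)
  ultimately show ?thesis by simp
qed

lemma Phi_ge_D:
  assumes n: "n \<ge> 1"
  shows "Dfun n \<omega> \<le> Phi n \<omega>"
proof (rule G_mono_right)
  show "u \<omega> Cset n \<le> u \<omega> H2 n" by (rule u_mono[OF Cset_sub_H2])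
  show "u \<omega> H2 n \<le> u \<omega> H3 n"
    unfolding u_def by (rule Sup_subset_mono) (use xi_H2_H3[OF n] in auto)
  show "u \<omega> H3 n < \<infinity>" by (rule u_fin[where c=2]) (use H3_bound in auto)
qed

theorem lemma2p3:
  fixes p :: real and A B :: "(int \<times> int) set" and n :: nat
  assumes "0 \<le> p" "p \<le> 1"
    and "B \<subseteq> A" "A \<subseteq> Cset" "infinite A" "infinite B"
  shows "(\<integral>\<^sup>+ \<omega>. incr \<omega> B n \<partial>perc p) \<ge> (\<integral>\<^sup>+ \<omega>. incr \<omega> A n \<partial>perc p)
       \<and> (\<integral>\<^sup>+ \<omega>. incr \<omega> A n \<partial>perc p) \<ge> ennreal (2 * p)"
proof
  show "(\<integral>\<^sup>+ \<omega>. incr \<omega> B n \<partial>perc p) \<ge> (\<integral>\<^sup>+ \<omega>. incr \<omega> A n \<partial>perc p)"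
    by (rule nn_integral_mono) (rule incr_anti[OF assms(3,4)])
  interpret P: prob_space "perc p" by (rule prob_space_perc)
  show "(\<integral>\<^sup>+ \<omega>. incr \<omega> A n \<partial>perc p) \<ge> ennreal (2 * p)"
  proof (cases "n = 0")
    case True
    have "ennreal (2 * p) \<le> ennreal 2" using assms(2) by (intro ennreal_leI) simp
    then have "ennreal (2 * p) \<le> 2" by simp
    also have "(2::ennreal) = (\<integral>\<^sup>+ \<omega>. 2 \<partial>perc p)" by (simp add: P.emeasure_space_1)
    also have "\<dots> \<le> (\<integral>\<^sup>+ \<omega>. incr \<omega> A n \<partial>perc p)"
      by (rule nn_integral_mono) (use incr_n0[OF assms(4)] True in auto)
    finally show ?thesis .
  next
    case False
    then have n: "n \<ge> 1" by simp
    show ?thesis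
    proof (cases "p = 0")
      case True then show ?thesis by simp
    next
      case False
      then have p0: "0 < p" using assms(1) by simp
      have Phim: "(\<lambda>\<omega>. Phi n \<omega>) \<in> borel_measurable (perc p)" by measurable
      have "ennreal (2 * p) = ennreal p * 2" using assms(1) by (simp add: ennreal_mult mult.commute)
      also have "\<dots> \<le> ennreal p * (\<integral>\<^sup>+ \<omega>. Dfun n \<omega> \<partial>perc p)"
        by (intro mult_left_mono ED[OF p0 assms(2) n]) simp
      also have "\<dots> \<le> ennreal p * (\<integral>\<^sup>+ \<omega>. Phi n \<omega> \<partial>perc p)"
        by (intro mult_left_mono nn_integral_mono Phi_ge_D[OF n]) simp
      also have "\<dots> = (\<integral>\<^sup>+ \<omega>. (if \<omega> (0,0) then 1 else 0) * Phi n \<omega> \<partial>perc p)"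
        by (rule indep_o[OF assms(1,2) Phim Phi_inv, symmetric])
      also have "\<dots> = (\<integral>\<^sup>+ \<omega>. incr \<omega> Cset n \<partial>perc p)"
        by (simp add: incr_C_eq[OF n])
      also have "\<dots> \<le> (\<integral>\<^sup>+ \<omega>. incr \<omega> A n \<partial>perc p)"
        by (rule nn_integral_mono) (rule incr_anti[OF assms(4) order_refl])
      finally show ?thesis .
    qed
  qed
qed


end
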